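(* Let $d\ge 1$ and $n\ge d+2$, and let $\mathcal{F}$, $B_i$ be as in the context. The number of indices $i\in[m]$ with $|B_i|=d$ is at most $\binom{n-1}{d}$. Moreover, equality holds if and only if $\{F_i: i\in[m],\ |B_i|=d\}$ is a star of maximum size, i.e. equals $\{F\in\binom{[n]}{d+1}: a\in F\}$ for some $a\in[n]$.
   Context: Let $\mathcal{F}=\{F_1,\dots,F_m\}\subseteq\binom{[n]}{d+1}$ consist of distinct sets and have VC-dimension at most $d$ (no $(d+1)$-set $S$ is shattered, i.e. no $S$ such that every $A\subseteq S$ equals $F\cap S$ for some $F\in\mathcal{F}$). For $i\in[m]$, call $B\subsetneq F_i$ admissible for $F_i$ if $F\cap F_i\neq B$ for every $F\in\mathcal{F}$ (admissible sets exist by the VC-dimension assumption). For each $i$, $B_i$ is a fixed admissible set for $F_i$ of maximum cardinality among all admissible sets for $F_i$. *)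

theory Defs
  imports Main
begin

definition shattered :: "(nat \<Rightarrow> nat set) \<Rightarrow> nat set \<Rightarrow> nat set \<Rightarrow> bool" where
  "shattered F I S \<longleftrightarrow> (\<forall>A. A \<subseteq> S \<longrightarrow> (\<exists>j\<in>I. F j \<inter> S = A))"

definition vc_dim_le :: "(nat \<Rightarrow> nat set) \<Rightarrow> nat set \<Rightarrow> nat \<Rightarrow> bool" where
  "vc_dim_le F I d \<longleftrightarrow> (\<forall>S. finite S \<and> card S = d + 1 \<longrightarrow> \<not> shattered F I S)"

definition admissible :: "(nat \<Rightarrow> nat set) \<Rightarrow> nat set \<Rightarrow> nat \<Rightarrow> nat set \<Rightarrow> bool" where
  "admissible F I i B \<longleftrightarrow> B \<subset> F i \<and> (\<forall>j\<in>I. F j \<inter> F i \<noteq> B)"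

end

theory Submission
  imports Defs
begin

context
  fixes V I :: "nat set" and F B :: "nat \<Rightarrow> nat set" and d :: nat
  assumes finV: "finite V" and finI: "finite I" and injF: "inj_on F I"
    and FV: "\<And>i. i\<in>I \<Longrightarrow> F i \<subseteq> V" and cardF: "\<And>i. i\<in>I \<Longrightarrow> card (F i) = d + 1"
    and BF: "\<And>i. i\<in>I \<Longrightarrow> B i \<subseteq> F i" and cardB: "\<And>i. i\<in>I \<Longrightarrow> card (B i) = d"
    and priv: "\<And>i j. i\<in>I \<Longrightarrow> j\<in>I \<Longrightarrow> B i \<subseteq> F j \<Longrightarrow> j = i"
begin

lemma finF: "i \<in> I \<Longrightarrow> finite (F i)"
  using FV finV finite_subset by blast

lemma phi_inj: "inj_on (\<lambda>i. if a \<in> F i then F i - {a} else B i) I"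
proof (rule inj_onI)
  fix i j assume i: "i\<in>I" and j: "j\<in>I"
    and eq: "(if a \<in> F i then F i - {a} else B i) = (if a \<in> F j then F j - {a} else B j)"
  show "i = j"
  proof (cases "a \<in> F i")
    case True
    show ?thesis
    proof (cases "a \<in> F j")
      case True2: True
      with True eq have "F i = F j" by (metis insert_Diff)
      then show ?thesis using injF i j by (meson inj_onD)
    next
      case False
      with True eq have "B j \<subseteq> F i" by auto
      then show ?thesis using priv[OF j i] by simp
    qed
  next
    case False
    show ?thesis
    proof (cases "a \<in> F j")
      case True
      with False eq have "B i \<subseteq> F j" by auto
      then show ?thesis using priv[OF i j] by simp
    next
      case False2: False
      with False eq have "B i \<subseteq> F j" using BF[OF j] by auto
      then show ?thesis using priv[OF i j] by simp
    qed
  qed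
qed

lemma phi_maps: "i \<in> I \<Longrightarrow> (if a \<in> F i then F i - {a} else B i) \<in> {E. E \<subseteq> V - {a} \<and> card E = d}"
proof (cases "a \<in> F i")
  case True
  assume i: "i \<in> I"
  then have "card (F i - {a}) = d" using True cardF[OF i] finF[OF i] by (simp add: card_Diff_singleton)
  then show ?thesis using True FV[OF i] by auto
next
  case False
  assume i: "i \<in> I"
  then show ?thesis using False FV[OF i] BF[OF i] cardB[OF i] by auto
qed

lemma cardT: "a \<in> V \<Longrightarrow> card {E. E \<subseteq> V - {a} \<and> card E = d} = (card V - 1) choose d"
  using finV by (simp add: n_subsets)

lemma bound: "card I \<le> card {E. E \<subseteq> V - {a} \<and> card E = d}"
proof (rule card_inj_on_le[OF phi_inj])
  show "finite {E. E \<subseteq> V - {a} \<and> card E = d}" using finV by auto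
  show "(\<lambda>i. if a \<in> F i then F i - {a} else B i) ` I \<subseteq> {E. E \<subseteq> V - {a} \<and> card E = d}"
    using phi_maps by blast
qed

lemma surj:
  assumes "card I = card {E. E \<subseteq> V - {a} \<and> card E = d}"
  shows "(\<lambda>i. if a \<in> F i then F i - {a} else B i) ` I = {E. E \<subseteq> V - {a} \<and> card E = d}"
proof (rule card_subset_eq)
  show "finite {E. E \<subseteq> V - {a} \<and> card E = d}" using finV by auto
  show "(\<lambda>i. if a \<in> F i then F i - {a} else B i) ` I \<subseteq> {E. E \<subseteq> V - {a} \<and> card E = d}"
    using phi_maps by blast
  show "card ((\<lambda>i. if a \<in> F i then F i - {a} else B i) ` I) = card {E. E \<subseteq> V - {a} \<and> card E = d}"
    using card_image[OF phi_inj] assms by simp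
qed

lemma full:
  assumes eqall: "\<And>a. a \<in> V \<Longrightarrow> card I = card {E. E \<subseteq> V - {a} \<and> card E = d}"
    and E: "E \<subseteq> V" "card E = d" "E \<notin> B ` I" and a: "a \<in> V" "a \<notin> E"
  shows "insert a E \<in> F ` I"
proof -
  have "E \<in> {E. E \<subseteq> V - {a} \<and> card E = d}" using E a by auto
  then have "E \<in> (\<lambda>i. if a \<in> F i then F i - {a} else B i) ` I"
    by (subst surj[OF eqall[OF a(1)]])
  then obtain i where Ei: "E = (if a \<in> F i then F i - {a} else B i)" and i: "i \<in> I"
    by (rule imageE)
  show ?thesis
  proof (cases "a \<in> F i")
    case True
    then have "insert a E = F i" using Ei by auto
    then show ?thesis using i by auto
  next
    case False
    then show ?thesis using Ei E(3) i by auto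
  qed
qed

lemma closure:
  assumes eqall: "\<And>a. a \<in> V \<Longrightarrow> card I = card {E. E \<subseteq> V - {a} \<and> card E = d}"
    and EA: "E \<subseteq> V - {x}" "card E = d" "i \<in> I" "F i = insert x E" "B i = E"
    and y: "y \<in> E" and w: "w \<in> V" "w \<notin> E" "w \<noteq> x"
  shows "\<exists>j\<in>I. F j = insert x (insert w (E - {y})) \<and> B j = insert w (E - {y})"
proof -
  have finE: "finite E" using EA finV finite_subset by blast
  have xV: "x \<in> V" using EA FV by auto
  let ?C = "insert x (E - {y})"
  have C1: "?C \<subseteq> V" using EA xV by auto
  have C2: "card ?C = d" using EA y finE
    by (auto simp: card_Diff_singleton card_insert_if)
      (metis One_nat_def Suc_pred card_gt_0_iff empty_iff)
  have C3: "?C \<notin> B ` I"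
  proof
    assume "?C \<in> B ` I"
    then obtain j where j: "j \<in> I" "B j = ?C" by auto
    then have "B j \<subseteq> F i" using EA by auto
    then have "i = j" using priv[OF j(1) EA(3)] by simp
    then show False using j EA by auto
  qed
  have "insert w ?C \<in> F ` I"
    by (rule full[OF eqall C1 C2 C3 w(1)]) (use w in auto)
  then obtain j where j: "j \<in> I" "F j = insert w ?C" by auto
  let ?E' = "insert w (E - {y})"
  have E'1: "?E' \<subseteq> V" using EA w by auto
  have E'2: "card ?E' = d" using EA y w finE
    by (auto simp: card_Diff_singleton card_insert_if)
      (metis One_nat_def Suc_pred card_gt_0_iff empty_iff)
  have "?E' \<in> B ` I"
  proof (rule ccontr)
    assume nb: "?E' \<notin> B ` I"
    have yV: "y \<in> V" using y EA by auto
    have "y \<notin> ?E'" using y w by auto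
    then have "insert y ?E' \<in> F ` I" using full[OF eqall E'1 E'2 nb yV] by simp
    then obtain k where k: "k \<in> I" "F k = insert y ?E'" by auto
    have "B i \<subseteq> F k" using k EA y by auto
    then have "k = i" using priv[OF EA(3) k(1)] by simp
    then have "w \<in> insert x E" using k EA by auto
    then show False using w by auto
  qed
  then obtain k where k: "k \<in> I" "B k = ?E'" by auto
  then have "B k \<subseteq> F j" using j by auto
  then have "j = k" using priv[OF k(1) j(1)] by simp
  moreover have "F j = insert x ?E'" using j(2) by auto
  ultimately show ?thesis using j(1) k(2) by blast
qed

lemma all_in_A:
  assumes eqall: "\<And>a. a \<in> V \<Longrightarrow> card I = card {E. E \<subseteq> V - {a} \<and> card E = d}"
  shows "\<forall>E. E \<subseteq> V - {x} \<longrightarrow> card E = d \<longrightarrow>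
     (\<forall>D. D \<subseteq> V - {x} \<and> card D = d \<and> (\<exists>i\<in>I. F i = insert x D \<and> B i = D) \<longrightarrow>
        card (E - D) = k \<longrightarrow> (\<exists>i\<in>I. F i = insert x E \<and> B i = E))"
proof (induction k)
  case 0
  show ?case
  proof (intro allI impI)
    fix E D assume E: "E \<subseteq> V - {x}" "card E = d"
      and D: "D \<subseteq> V - {x} \<and> card D = d \<and> (\<exists>i\<in>I. F i = insert x D \<and> B i = D)"
      and c: "card (E - D) = 0"
    have finD: "finite D" "finite E" using D E finV finite_subset by blast+
    then have "E \<subseteq> D" using c by auto
    then have "E = D" using finD D E by (metis card_subset_eq)
    then show "\<exists>i\<in>I. F i = insert x E \<and> B i = E" using D by auto
  qed
next
  case (Suc k)
  show ?case
  proof (intro allI impI)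
    fix E D assume E: "E \<subseteq> V - {x}" "card E = d"
      and D: "D \<subseteq> V - {x} \<and> card D = d \<and> (\<exists>i\<in>I. F i = insert x D \<and> B i = D)"
      and c: "card (E - D) = Suc k"
    have finD: "finite D" "finite E" using D E finV finite_subset by blast+
    obtain w where w: "w \<in> E" "w \<notin> D" using c by (metis Diff_iff card_0_eq finD(2) finite_Diff nat.distinct(1) subsetI subset_empty)
    have "\<not> D \<subseteq> E"
    proof
      assume "D \<subseteq> E"
      then have "D = E" using finD D E by (metis card_subset_eq)
      then show False using w by auto
    qed
    then obtain y where y: "y \<in> D" "y \<notin> E" by auto
    from D obtain i where i: "i \<in> I" "F i = insert x D" "B i = D" by auto
    have "\<exists>j\<in>I. F j = insert x (insert w (D - {y})) \<and> B j = insert w (D - {y})"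
      by (rule closure[OF eqall _ _ i y(1)]) (use D E w in auto)
    moreover have "insert w (D - {y}) \<subseteq> V - {x}" using D E w by auto
    moreover have "card (insert w (D - {y})) = d" using D y w finD
      by (auto simp: card_Diff_singleton card_insert_if)
        (metis One_nat_def Suc_pred card_gt_0_iff empty_iff)
    moreover have "E - insert w (D - {y}) = (E - D) - {w}" using y by auto
    then have "card (E - insert w (D - {y})) = k" using c w by (simp add: card_Diff_singleton finD)
    ultimately show "\<exists>i\<in>I. F i = insert x E \<and> B i = E"
      using Suc.IH[rule_format, OF E(1) E(2), of "insert w (D - {y})"] by blast
  qed
qed

lemma card_star:
  assumes a: "a \<in> V"
  shows "card {G. G \<subseteq> V \<and> card G = d + 1 \<and> a \<in> G} = (card V - 1) choose d"
proof -
  have eq: "{G. G \<subseteq> V \<and> card G = d + 1 \<and> a \<in> G} = insert a ` {E. E \<subseteq> V - {a} \<and> card E = d}"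
  proof
    show "{G. G \<subseteq> V \<and> card G = d + 1 \<and> a \<in> G} \<subseteq> insert a ` {E. E \<subseteq> V - {a} \<and> card E = d}"
    proof
      fix G assume G: "G \<in> {G. G \<subseteq> V \<and> card G = d + 1 \<and> a \<in> G}"
      then have fG: "finite G" using finV finite_subset by blast
      have "G - {a} \<in> {E. E \<subseteq> V - {a} \<and> card E = d}" using G fG by (auto simp: card_Diff_singleton)
      moreover have "G = insert a (G - {a})" using G by auto
      ultimately show "G \<in> insert a ` {E. E \<subseteq> V - {a} \<and> card E = d}" by blast
    qed
  next
    show "insert a ` {E. E \<subseteq> V - {a} \<and> card E = d} \<subseteq> {G. G \<subseteq> V \<and> card G = d + 1 \<and> a \<in> G}"
    proof
      fix G assume "G \<in> insert a ` {E. E \<subseteq> V - {a} \<and> card E = d}"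
      then obtain E where E: "E \<subseteq> V - {a}" "card E = d" "G = insert a E" by auto
      then have fE: "finite E" using finV finite_subset by blast
      have "a \<notin> E" using E by auto
      then show "G \<in> {G. G \<subseteq> V \<and> card G = d + 1 \<and> a \<in> G}" using E fE a by auto
    qed
  qed
  have inj: "inj_on (insert a) {E. E \<subseteq> V - {a} \<and> card E = d}"
  proof (rule inj_onI)
    fix E1 E2 assume h: "E1 \<in> {E. E \<subseteq> V - {a} \<and> card E = d}" "E2 \<in> {E. E \<subseteq> V - {a} \<and> card E = d}"
      "insert a E1 = insert a E2"
    then have "a \<notin> E1" "a \<notin> E2" by auto
    then show "E1 = E2" using h(3) by (metis Diff_insert_absorb)
  qed
  have "card (insert a ` {E. E \<subseteq> V - {a} \<and> card E = d}) = card {E. E \<subseteq> V - {a} \<and> card E = d}"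
    by (rule card_image[OF inj])
  then show ?thesis using eq cardT[OF a] by simp
qed

lemma main_ctx:
  assumes dV: "d < card V"
  shows "card I \<le> (card V - 1) choose d \<and>
     (card I = (card V - 1) choose d \<longleftrightarrow> (\<exists>a\<in>V. F ` I = {G. G \<subseteq> V \<and> card G = d + 1 \<and> a \<in> G}))"
proof -
  have "V \<noteq> {}" using dV by auto
  then obtain a0 where a0: "a0 \<in> V" by auto
  have bnd: "card I \<le> (card V - 1) choose d" using bound[of a0] cardT[OF a0] by simp
  have cI: "card (F ` I) = card I" using card_image[OF injF] .
  have r1: "card I = (card V - 1) choose d" if "\<exists>a\<in>V. F ` I = {G. G \<subseteq> V \<and> card G = d + 1 \<and> a \<in> G}"
  proof -
    from that obtain a where a: "a \<in> V" "F ` I = {G. G \<subseteq> V \<and> card G = d + 1 \<and> a \<in> G}" by blast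
    have "card I = card (F ` I)" using cI by simp
    also have "\<dots> = (card V - 1) choose d" using a(2) card_star[OF a(1)] by simp
    finally show ?thesis .
  qed
  have r2: "\<exists>a\<in>V. F ` I = {G. G \<subseteq> V \<and> card G = d + 1 \<and> a \<in> G}" if c: "card I = (card V - 1) choose d"
  proof -
    have eqall: "\<And>a. a \<in> V \<Longrightarrow> card I = card {E. E \<subseteq> V - {a} \<and> card E = d}"
      using c cardT by simp
    have "(card V - 1) choose d > 0" using dV by simp
    then have "I \<noteq> {}" using c by auto
    then obtain i0 where i0: "i0 \<in> I" by auto
    have "card (F i0 - B i0) = 1" using cardF[OF i0] cardB[OF i0] BF[OF i0] finF[OF i0]
      by (simp add: card_Diff_subset finite_subset)
    then obtain x where x: "F i0 - B i0 = {x}" by (rule card_1_singletonE)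
    have Fi0: "F i0 = insert x (B i0)" using x BF[OF i0] by auto
    have xB: "x \<notin> B i0" using x by auto
    have xV: "x \<in> V" using Fi0 FV[OF i0] by auto
    have D0: "B i0 \<subseteq> V - {x} \<and> card (B i0) = d \<and> (\<exists>i\<in>I. F i = insert x (B i0) \<and> B i = B i0)"
      using Fi0 xB FV[OF i0] cardB[OF i0] i0 by auto
    have sub: "{G. G \<subseteq> V \<and> card G = d + 1 \<and> x \<in> G} \<subseteq> F ` I"
    proof
      fix G assume G: "G \<in> {G. G \<subseteq> V \<and> card G = d + 1 \<and> x \<in> G}"
      then have fG: "finite G" using finV finite_subset by blast
      have E1: "G - {x} \<subseteq> V - {x}" using G by auto
      have E2: "card (G - {x}) = d" using G fG by (auto simp: card_Diff_singleton)
      have AA: "\<forall>E. E \<subseteq> V - {x} \<longrightarrow> card E = d \<longrightarrow>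
       (\<forall>D. D \<subseteq> V - {x} \<and> card D = d \<and> (\<exists>i\<in>I. F i = insert x D \<and> B i = D) \<longrightarrow>
         card (E - D) = card (G - {x} - B i0) \<longrightarrow> (\<exists>i\<in>I. F i = insert x E \<and> B i = E))"
        by (rule all_in_A) (rule eqall)
      obtain i where "i \<in> I" "F i = insert x (G - {x})"
        using AA[rule_format, OF E1 E2 D0 refl] by blast
      moreover have "insert x (G - {x}) = G" using G by auto
      ultimately show "G \<in> F ` I" by auto
    qed
    have "{G. G \<subseteq> V \<and> card G = d + 1 \<and> x \<in> G} = F ` I"
    proof (rule card_subset_eq[OF _ sub])
      show "finite (F ` I)" using finI by simp
      show "card {G. G \<subseteq> V \<and> card G = d + 1 \<and> x \<in> G} = card (F ` I)"
        using card_star[OF xV] cI c by simp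
    qed
    then show ?thesis using xV by blast
  qed
  show ?thesis using bnd r1 r2 by blast
qed

end

theorem claim4p2:
  fixes d n m :: nat and F :: "nat \<Rightarrow> nat set" and B :: "nat \<Rightarrow> nat set"
  assumes "d \<ge> 1" and "n \<ge> d + 2"
    and "\<forall>i\<in>{1..m}. F i \<subseteq> {1..n} \<and> card (F i) = d + 1"
    and "inj_on F {1..m}"
    and "vc_dim_le F {1..m} d"
    and "\<forall>i\<in>{1..m}. admissible F {1..m} i (B i)"
    and "\<forall>i\<in>{1..m}. \<forall>B'. admissible F {1..m} i B' \<longrightarrow> card B' \<le> card (B i)"
  shows "card {i\<in>{1..m}. card (B i) = d} \<le> (n - 1) choose d \<and>
         (card {i\<in>{1..m}. card (B i) = d} = (n - 1) choose d \<longleftrightarrow>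
          (\<exists>a\<in>{1..n}. F ` {i\<in>{1..m}. card (B i) = d} =
                        {G. G \<subseteq> {1..n} \<and> card G = d + 1 \<and> a \<in> G}))"
proof -
  let ?I = "{i\<in>{1..m}. card (B i) = d}"
  let ?V = "{1..n::nat}"
  have A3: "\<And>i. i \<in> ?I \<Longrightarrow> F i \<subseteq> ?V \<and> card (F i) = d + 1" using assms(3) by auto
  have adm: "\<And>i. i \<in> ?I \<Longrightarrow> admissible F {1..m} i (B i)" using assms(6) by auto
  have BF: "\<And>i. i \<in> ?I \<Longrightarrow> B i \<subseteq> F i" using adm unfolding admissible_def by auto
  have injI: "inj_on F ?I" using assms(4) by (rule inj_on_subset) auto
  have priv: "j = i" if i: "i \<in> ?I" and j: "j \<in> ?I" and sub: "B i \<subseteq> F j" for i j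
  proof (rule ccontr)
    assume ne: "j \<noteq> i"
    have fi: "finite (F i)" "finite (F j)" using A3[OF i] A3[OF j] finite_subset by blast+
    have "F j \<noteq> F i" using ne injI i j by (meson inj_onD)
    have "\<not> F i \<subseteq> F j"
    proof
      assume "F i \<subseteq> F j"
      then have "F i = F j" using fi A3[OF i] A3[OF j] by (metis card_subset_eq)
      then show False using \<open>F j \<noteq> F i\<close> by simp
    qed
    then have ps: "F j \<inter> F i \<subset> F i" by auto
    then have lt: "card (F j \<inter> F i) < d + 1" using psubset_card_mono[OF fi(1) ps] A3[OF i] by simp
    have sb: "B i \<subseteq> F j \<inter> F i" using sub BF[OF i] by auto
    have cb: "card (B i) = d" using i by simp
    have "card (B i) \<le> card (F j \<inter> F i)" using sb fi by (simp add: card_mono)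
    then have "card (B i) = card (F j \<inter> F i)" using lt cb by simp
    then have "B i = F j \<inter> F i" using sb fi by (metis card_subset_eq finite_Int)
    moreover have "F j \<inter> F i \<noteq> B i" using adm[OF i] j unfolding admissible_def by auto
    ultimately show False by simp
  qed
  have M: "card ?I \<le> (card ?V - 1) choose d \<and>
     (card ?I = (card ?V - 1) choose d \<longleftrightarrow> (\<exists>a\<in>?V. F ` ?I = {G. G \<subseteq> ?V \<and> card G = d + 1 \<and> a \<in> G}))"
  proof (rule main_ctx)
    show "finite ?V" by simp
    show "finite ?I" by simp
    show "inj_on F ?I" by (rule injI)
    show "\<And>i. i \<in> ?I \<Longrightarrow> F i \<subseteq> ?V" using A3 by blast
    show "\<And>i. i \<in> ?I \<Longrightarrow> card (F i) = d + 1" using A3 by blast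
    show "\<And>i. i \<in> ?I \<Longrightarrow> B i \<subseteq> F i" by (rule BF)
    show "\<And>i. i \<in> ?I \<Longrightarrow> card (B i) = d" by simp
    show "\<And>i j. i \<in> ?I \<Longrightarrow> j \<in> ?I \<Longrightarrow> B i \<subseteq> F j \<Longrightarrow> j = i" by (rule priv)
    show "d < card ?V" using assms(2) by simp
  qed
  then show ?thesis by simp
qed

end
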